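(* With $a_n = \left(\frac23\right)^n p_n\!\left(\frac14\right)$, as power series in $t$ (convergent near $t=0$), \[ \sum_{n=0}^\infty a_n\frac{t^{n+1}}{(n+1)!} = \frac{6e^{t/2}\left(\arcsin(e^{t/2}/2) - \arcsin(1/2)\right)}{(4-e^t)^{1/2}}. \]
   Context: Define polynomial sequences $(p_k(x))_{k\ge -1}$ and $(q_k(x))_{k\ge -1}$ by $p_{-1}(x)=0$, $q_{-1}(x)=1$ and, for $k\ge -1$, $p_{k+1}(x) = 2(kx+1)p_k(x) + 2x(1-x)p_k'(x) + q_k(x)$, $q_{k+1}(x) = (2(k+1)x+1)q_k(x) + 2x(1-x)q_k'(x)$. *)

theory Defs
  imports Complex_Main "HOL-Computational_Algebra.Polynomial"
begin

text \<open>pq m = (p_{m-1}, q_{m-1}); the paper's index k = m - 1 starts at -1.\<close>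
fun pq :: "nat \<Rightarrow> real poly \<times> real poly" where
  "pq 0 = (0, 1)"
| "pq (Suc m) =
     (let p = fst (pq m); q = snd (pq m); k = real m - 1 in
       (smult 2 [:1, k:] * p + [:0, 2, -2:] * pderiv p + q,
        [:1, 2 * (k + 1):] * q + [:0, 2, -2:] * pderiv q))"

definition p_poly :: "nat \<Rightarrow> real poly" where
  "p_poly n = fst (pq (Suc n))"

definition q_poly :: "nat \<Rightarrow> real poly" where
  "q_poly n = snd (pq (Suc n))"

definition a_seq :: "nat \<Rightarrow> real" where
  "a_seq n = (2/3) ^ n * poly (p_poly n) (1/4)"

end

theory Submission
  imports Defs
begin

definition Lf :: "real poly \<Rightarrow> real poly \<Rightarrow> real \<Rightarrow> real" where
 "Lf P Q t = exp t * poly P (exp t / 4) + 4 * (arcsin (exp (t/2) / 2) - arcsin (1/2)) * exp (t/2) * poly Q (exp t / 4) / sqrt (4 - exp t)"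

lemma exp_half_sq: "exp (t/2) ^ 2 = exp (t::real)"
  by (simp add: exp_double[symmetric])

lemma dA: assumes "exp t < 4"
  shows "DERIV (\<lambda>t. arcsin (exp (t/2) / 2)) t :> exp (t/2) / (2 * sqrt (4 - exp t))"
proof -
  have "exp (t/2)^2 < 2^2" using assms by (simp add: exp_half_sq)
  then have "exp (t/2) < 2" by (rule power_less_imp_less_base) simp
  then have e2: "exp (t/2) / 2 < 1" by simp
  have e1: "- 1 < exp (t/2) / 2" by (smt (verit) exp_gt_zero divide_pos_pos)
  have d1: "DERIV (\<lambda>t. exp (t/2) / 2) t :> exp (t/2) / 4"
    by (rule derivative_eq_intros refl | simp)+
  have D: "DERIV (\<lambda>t. arcsin (exp (t/2) / 2)) t :> inverse (sqrt (1 - (exp (t/2) / 2)^2)) * (exp (t/2) / 4)"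
    using DERIV_chain2[OF DERIV_arcsin[OF e1 e2] d1] .
  moreover have S: "sqrt (1 - (exp (t/2) / 2)^2) = sqrt (4 - exp t) / 2"
  proof -
    have h: "1 - (exp (t/2) / 2)^2 = (4 - exp t) / 4" by (simp add: power_divide exp_half_sq field_simps)
    have "sqrt (1 - (exp (t/2) / 2)^2) = sqrt ((4 - exp t) / 4)" by (simp only: h)
    then have "sqrt (1 - (exp (t/2) / 2)^2) = sqrt (4 - exp t) / sqrt 4" by (simp only: real_sqrt_divide)
    moreover have "sqrt (4::real) = 2" by (simp add: real_sqrt_unique)
    ultimately show ?thesis by simp
  qed
  have X: "inverse (sqrt (1 - (exp (t/2) / 2)^2)) * (exp (t/2) / 4) = exp (t/2)/(2*sqrt(4-exp t))"
    unfolding S by (simp add: field_simps)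
  show ?thesis using DERIV_cong[OF D X] .
qed

lemma dS: assumes "exp t < 4"
  shows "DERIV (\<lambda>t. sqrt (4 - exp t)) t :> - exp t / (2 * sqrt (4 - exp t))"
proof -
  have s: "0 < 4 - exp t" using assms by simp
  have d1: "DERIV (\<lambda>t. 4 - exp t) t :> - exp t"
    by (rule derivative_eq_intros refl | simp)+
  show ?thesis using DERIV_chain2[OF DERIV_real_sqrt[OF s] d1] by (simp add: field_simps)
qed

lemma dP: "DERIV (\<lambda>t. poly P (exp t / 4)) t :> poly (pderiv P) (exp t / 4) * (exp t / 4)"
proof -
  have d1: "DERIV (\<lambda>t. exp t / 4) t :> exp t / 4"
    by (rule derivative_eq_intros refl | simp)+
  show ?thesis using DERIV_chain2[OF poly_DERIV d1] .
qed

definition nxtP :: "nat \<Rightarrow> real poly \<Rightarrow> real poly \<Rightarrow> real poly" where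
  "nxtP m P Q = smult 2 [:1, real m - 1:] * P + [:0, 2, -2:] * pderiv P + Q"
definition nxtQ :: "nat \<Rightarrow> real poly \<Rightarrow> real poly" where
  "nxtQ m Q = [:1, 2 * (real m - 1 + 1):] * Q + [:0, 2, -2:] * pderiv Q"

lemma alg2:
  fixes s e E a c p p' q q' m :: real
  assumes "s*s = 4 - e" "E*E = e" "s \<noteq> 0" "4 - e \<noteq> 0"
  shows "e * p + p' * (e / 4) * e +
     (((4 * (E / (2 * s) - 0) * E + E / 2 * (4 * (a - c))) * q +
       q' * (e / 4) * (4 * (a - c) * E)) *
      s -
      4 * (a - c) * E * q * (- e / (2 * s))) /
     (4 - e) =
     (2 *
      (e *
       (2 * (1 + (m - 1) * (e / 4)) * p +
        (2 * (e / 4) - 2 * (e / 4) * (e / 4)) * p' +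
        q) +
       4 * (a - c) * E *
       ((1 + 2 * m * (e / 4)) * q +
        (2 * (e / 4) - 2 * (e / 4) * (e / 4)) * q') /
       s) -
      m * e * (e * p + 4 * (a - c) * E * q / s)) /
     (4 - e)"
proof -
  have h1: "4 * (E / (2 * s) - 0) * E = 2 * e / s" using assms(2,3) by (simp add: field_simps)
  have he: "e = 4 - s*s" using assms(1) by simp
  have hs: "4 - (4 - s*s) = s*s" by simp
  show ?thesis unfolding h1 unfolding he hs using assms(3) by (simp add: field_simps)
qed

lemma poly_nxtP: "poly (nxtP m P Q) x = 2*(1 + (real m - 1)*x)*poly P x + (2*x - 2*x*x)*poly (pderiv P) x + poly Q x"
  by (simp add: nxtP_def algebra_simps)
lemma poly_nxtQ: "poly (nxtQ m Q) x = (1 + 2*real m*x)*poly Q x + (2*x - 2*x*x)*poly (pderiv Q) x"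
  by (simp add: nxtQ_def algebra_simps)

lemma Lf_deriv:
  assumes "exp t < 4"
  shows "DERIV (Lf P Q) t :> (2 * Lf (nxtP m P Q) (nxtQ m Q) t - real m * exp t * Lf P Q t) / (4 - exp t)"
proof -
  have sp: "sqrt (4 - exp t) > 0" using assms by simp
  have ne: "sqrt (4 - exp t) \<noteq> 0" using sp by simp
  have w': "0 < 4 - exp t" using assms by simp
  have dE: "DERIV (\<lambda>t. exp (t/2)) t :> exp (t/2) / 2"
    by (rule derivative_eq_intros refl | simp)+
  note d1 = DERIV_mult[OF DERIV_exp dP[of P]]
  note d2 = DERIV_mult[OF DERIV_mult[OF DERIV_cmult[where c=4, OF DERIV_diff[OF dA[OF assms] DERIV_const[where k="arcsin (1/2)"]]] dE] dP[of Q]]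
  note d = DERIV_add[OF d1 DERIV_divide[OF d2 dS[OF assms] ne]]
  define s where "s = sqrt (4 - exp t)"
  define a where "a = arcsin (exp (t/2) / 2)"
  define c where "c = arcsin (1/2::real)"
  define p where "p = poly P (exp t / 4)"
  define p' where "p' = poly (pderiv P) (exp t / 4)"
  define q where "q = poly Q (exp t / 4)"
  define q' where "q' = poly (pderiv Q) (exp t / 4)"
  define E where "E = exp (t/2)"
  define e where "e = exp t"
  have f1: "s*s = 4 - e" unfolding s_def e_def using w' by (simp only: real_sqrt_mult_self abs_of_pos)
  have f2: "E*E = e" unfolding E_def e_def using exp_half_sq[of t] by (simp only: power2_eq_square)
  have f3: "s \<noteq> 0" "4 - e \<noteq> 0" using ne w' unfolding s_def e_def by simp_all
  show ?thesis
    unfolding Lf_def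
    apply (rule DERIV_cong[OF d])
    apply (simp only: poly_nxtP poly_nxtQ)
    apply (simp only: s_def[symmetric] a_def[symmetric] c_def[symmetric])
    apply (simp only: p_def[symmetric] p'_def[symmetric] q_def[symmetric] q'_def[symmetric])
    apply (simp only: E_def[symmetric])
    apply (simp only: e_def[symmetric] f1)
    by (rule alg2[OF f1 f2 f3])
qed

lemma pq_Suc: "pq (Suc m) = (nxtP m (fst (pq m)) (snd (pq m)), nxtQ m (snd (pq m)))"
  by (simp add: nxtP_def nxtQ_def Let_def)

definition K :: "nat \<Rightarrow> real \<Rightarrow> real" where
  "K m t = (2 / (4 - exp t)) ^ m * Lf (fst (pq m)) (snd (pq m)) t / 2"

lemma alg3aux:
  fixes e La Lb y w :: real
  assumes "w \<noteq> 0"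
  shows "(real (Suc n) * (2 * e / w^2 * y) * La + (2*Lb - real (Suc n) * e * La)/w * ((2/w) * y)) / 2 = (2/w) * ((2/w) * y) * Lb / 2"
  using assms by (simp add: field_simps power2_eq_square)

lemma alg3:
  fixes e La Lb :: real
  assumes "4 - e \<noteq> 0"
  shows "(real m * (2 * e / (4 - e)^2 * (2/(4-e))^(m - Suc 0)) * La + (2*Lb - real m * e * La)/(4-e) * (2/(4-e))^m) / 2 = (2/(4-e))^(Suc m) * Lb / 2"
proof (cases m)
  case 0
  then show ?thesis using assms by (simp add: field_simps)
next
  case (Suc n)
  then show ?thesis using alg3aux[OF assms, where n=n and La=La and Lb=Lb and y="(2/(4-e))^n" and e=e] by simp
qed

lemma K_deriv:
  assumes "exp t < 4"
  shows "DERIV (K m) t :> K (Suc m) t"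
proof -
  have w: "4 - exp t \<noteq> 0" using assms by simp
  have dphi: "DERIV (\<lambda>t. 2 / (4 - exp t)) t :> 2 * exp t / (4 - exp t)^2"
    apply (rule DERIV_cong[OF DERIV_divide[OF DERIV_const[where k=2] DERIV_diff[OF DERIV_const[where k=4] DERIV_exp] w]])
    by (simp add: power2_eq_square)
  note d = DERIV_cdivide[OF DERIV_mult[OF DERIV_power[OF dphi, of m] Lf_deriv[OF assms, of "fst (pq m)" "snd (pq m)" m]], of 2]
  show ?thesis
    unfolding K_def[abs_def]
    apply (rule DERIV_cong[OF d])
    apply (simp only: pq_Suc fst_conv snd_conv)
    using alg3[OF w] .
qed

lemma pq1: "pq (Suc 0) = (1, 1)"
  by (simp add: pq_Suc nxtP_def nxtQ_def one_pCons Let_def)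

lemma K0_F: assumes "exp t < 4" shows "6 * exp (t / 2) * (arcsin (exp (t / 2) / 2) - arcsin (1 / 2)) / sqrt (4 - exp t) = 3 * K 0 t"
  using assms by (simp add: K_def Lf_def field_simps)

lemma exp_lt4: "exp t < 4 \<longleftrightarrow> t < ln (4::real)"
  by (metis exp_less_cancel_iff exp_ln zero_less_numeral)

lemma K1: assumes "exp t < 4" shows "(4 - exp t) * K 1 t = 2 * K 0 t + exp t"
  using assms by (simp add: K_def Lf_def pq1 field_simps)

lemma Kat0_Suc: "K (Suc n) 0 = a_seq n / 3"
  by (simp add: K_def Lf_def a_seq_def p_poly_def field_simps)

lemma Kat0_0: "K 0 0 = 0"
  by (simp add: K_def Lf_def)

lemma pascal_sum:
  fixes c :: "nat \<Rightarrow> real"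
  shows "(\<Sum>k\<le>n. of_nat (n choose k) * (c k + c (Suc k))) = (\<Sum>k\<le>Suc n. of_nat (Suc n choose k) * c k)"
proof -
  have A: "(\<Sum>k\<le>n. of_nat (n choose k) * c k) = c 0 + (\<Sum>k\<le>n. of_nat (n choose Suc k) * c (Suc k))"
  proof -
    have "(\<Sum>k\<le>n. of_nat (n choose k) * c k) = (\<Sum>k\<le>Suc n. of_nat (n choose k) * c k)"
      by simp
    also have "\<dots> = c 0 + (\<Sum>k\<le>n. of_nat (n choose Suc k) * c (Suc k))"
      by (subst sum.atMost_Suc_shift) simp
    finally show ?thesis .
  qed
  have "(\<Sum>k\<le>Suc n. of_nat (Suc n choose k) * c k) = c 0 + (\<Sum>k\<le>n. of_nat (Suc n choose Suc k) * c (Suc k))"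
    by (subst sum.atMost_Suc_shift) simp
  also have "\<dots> = c 0 + (\<Sum>k\<le>n. of_nat (n choose k) * c (Suc k)) + (\<Sum>k\<le>n. of_nat (n choose Suc k) * c (Suc k))"
    by (simp add: sum.distrib distrib_right)
  finally show ?thesis using A by (simp add: sum.distrib distrib_left)
qed

definition Dn :: "nat \<Rightarrow> real \<Rightarrow> real" where
  "Dn n t = 4 * K (Suc n) t - (\<Sum>k\<le>n. of_nat (n choose k) * (exp t * K (Suc k) t)) - 2 * K n t - exp t"

lemma Dn_deriv:
  assumes "exp t < 4"
  shows "DERIV (Dn n) t :> Dn (Suc n) t"
proof -
  have dk: "DERIV (\<lambda>t. of_nat (n choose k) * (exp t * K (Suc k) t)) t :>
      of_nat (n choose k) * (exp t * K (Suc k) t + exp t * K (Suc (Suc k)) t)" for k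
    using DERIV_cmult[OF DERIV_mult[OF DERIV_exp K_deriv[OF assms, of "Suc k"]], of "of_nat (n choose k)"]
    by (simp add: algebra_simps)
  have ds: "DERIV (\<lambda>t. \<Sum>k\<le>n. of_nat (n choose k) * (exp t * K (Suc k) t)) t :>
      (\<Sum>k\<le>n. of_nat (n choose k) * (exp t * K (Suc k) t + exp t * K (Suc (Suc k)) t))"
    by (rule DERIV_sum) (rule dk)
  note d = DERIV_diff[OF DERIV_diff[OF DERIV_diff[OF DERIV_cmult[OF K_deriv[OF assms, of "Suc n"], of 4]
     ds] DERIV_cmult[OF K_deriv[OF assms, of n], of 2]] DERIV_exp]
  have e: "(\<Sum>k\<le>n. of_nat (n choose k) * (exp t * K (Suc k) t + exp t * K (Suc (Suc k)) t))
     = (\<Sum>k\<le>Suc n. of_nat (Suc n choose k) * (exp t * K (Suc k) t))"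
    using pascal_sum[of n "\<lambda>k. exp t * K (Suc k) t"] by simp
  show ?thesis
    unfolding Dn_def[abs_def]
    apply (rule DERIV_cong[OF d])
    using e by simp
qed

lemma Dn_zero: "exp t < 4 \<Longrightarrow> Dn n t = 0"
proof (induction n arbitrary: t)
  case 0
  then show ?case using K1[OF 0] by (simp add: Dn_def algebra_simps)
next
  case (Suc n)
  have "Dn (Suc n) t = 0"
  proof (rule DERIV_local_const[OF Dn_deriv[OF Suc.prems]])
    show "0 < ln 4 - t" using Suc.prems by (simp add: exp_lt4)
    show "\<forall>y. \<bar>t - y\<bar> < ln 4 - t \<longrightarrow> Dn n t = Dn n y"
    proof (intro allI impI)
      fix y assume "\<bar>t - y\<bar> < ln 4 - t"
      then have "y < ln 4" by linarith
      then have "exp y < 4" by (simp add: exp_lt4)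
      then show "Dn n t = Dn n y" using Suc.IH Suc.prems by simp
    qed
  qed
  then show ?case .
qed

lemma a_rec: "4 * a_seq n = (\<Sum>k\<le>n. of_nat (n choose k) * a_seq k) + 2 * (if n = 0 then 0 else a_seq (n - 1)) + 3"
proof -
  have "Dn n 0 = 0" by (rule Dn_zero) simp
  moreover have "K n 0 = (if n = 0 then 0 else a_seq (n - 1) / 3)"
    by (cases n) (simp_all add: Kat0_0 Kat0_Suc)
  ultimately have "4 * (a_seq n / 3) - (\<Sum>k\<le>n. of_nat (n choose k) * (a_seq k / 3)) - 2 * (if n = 0 then 0 else a_seq (n - 1) / 3) - 1 = 0"
    by (simp add: Dn_def Kat0_Suc)
  then show ?thesis by (simp add: sum_divide_distrib[symmetric] field_simps split: if_splits)
qed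


lemma a_rec3: "3 * a_seq n = (\<Sum>k<n. of_nat (n choose k) * a_seq k) + 2 * (if n = 0 then 0 else a_seq (n - 1)) + 3"
  using a_rec[of n] by (simp add: atMost_Suc lessThan_Suc_atMost[symmetric] sum.lessThan_Suc)

lemma geom4: "(\<Sum>k<n. (4::real)^k) \<le> 4^n / 3"
  by (induction n) simp_all

lemma choose_fact_le: "k \<le> n \<Longrightarrow> real (n choose k) * fact k \<le> fact n"
proof -
  assume kn: "k \<le> n"
  have eq: "fact k * fact (n - k) * real (n choose k) = fact n"
    using binomial_fact_lemma[OF kn] by (metis of_nat_fact of_nat_mult)
  have "real (n choose k) * fact k = real (n choose k) * fact k * 1" by simp
  also have "\<dots> \<le> real (n choose k) * fact k * fact (n - k)"
    by (intro mult_left_mono) auto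
  also have "\<dots> = fact n" using eq by (simp only: ac_simps)
  finally show ?thesis .
qed

lemma a_bound: "\<bar>a_seq n\<bar> \<le> 4^n * fact n"
proof (induction n rule: less_induct)
  case (less n)
  have S: "\<bar>\<Sum>k<n. of_nat (n choose k) * a_seq k\<bar> \<le> fact n * 4^n / 3"
  proof -
    have "\<bar>\<Sum>k<n. of_nat (n choose k) * a_seq k\<bar> \<le> (\<Sum>k<n. of_nat (n choose k) * \<bar>a_seq k\<bar>)"
      by (rule order.trans[OF sum_abs]) (simp add: abs_mult)
    also have "\<dots> \<le> (\<Sum>k<n. fact n * 4^k)"
    proof (rule sum_mono)
      fix k assume k: "k \<in> {..<n}"
      have "of_nat (n choose k) * \<bar>a_seq k\<bar> \<le> of_nat (n choose k) * (4^k * fact k)"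
        using less.IH[of k] k by (intro mult_left_mono) auto
      also have "\<dots> = 4^k * (of_nat (n choose k) * fact k)" by simp
      also have "\<dots> \<le> 4^k * fact n"
        using choose_fact_le[of k n] k by (intro mult_left_mono) auto
      finally show "of_nat (n choose k) * \<bar>a_seq k\<bar> \<le> fact n * 4^k" by (simp add: mult.commute)
    qed
    also have "\<dots> = fact n * (\<Sum>k<n. 4^k)" by (simp add: sum_distrib_left)
    also have "\<dots> \<le> fact n * (4^n / 3)" by (intro mult_left_mono geom4) simp
    finally show ?thesis by simp
  qed
  show ?case
  proof (cases n)
    case 0
    then show ?thesis using a_rec3[of 0] by simp
  next
    case (Suc m)
    have IHm: "\<bar>a_seq m\<bar> \<le> 4^m * fact m" using less.IH Suc by simp
    have fm: "(4::real)^m * fact m \<le> 4^n * fact n / 4"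
    proof -
      have eq: "(4::real)^n * fact n = 4 * (4^m * fact m) * (real m + 1)" using Suc by (simp add: algebra_simps)
      have "4 * (4^m * fact m) * 1 \<le> 4 * ((4::real)^m * fact m) * (real m + 1)"
        by (intro mult_left_mono) auto
      then show ?thesis unfolding eq by simp
    qed
    have big: "(4::real) \<le> 4^n * fact n"
    proof -
      have "(4::real)^1 \<le> 4^n" using Suc by (intro power_increasing) auto
      moreover have "(1::real) \<le> fact n" by simp
      ultimately have "(4::real)^1 * 1 \<le> 4^n * fact n" by (intro mult_mono) auto
      then show ?thesis by simp
    qed
    have "3 * \<bar>a_seq n\<bar> \<le> \<bar>\<Sum>k<n. of_nat (n choose k) * a_seq k\<bar> + 2 * \<bar>a_seq m\<bar> + 3"
      using a_rec3[of n] Suc by simp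
    also have "\<dots> \<le> fact n * 4^n / 3 + 2 * (4^n * fact n / 4) + 3"
      using S IHm fm by linarith
    also have "\<dots> \<le> 3 * (4^n * fact n)" using big by (simp add: algebra_simps)
    finally show ?thesis by simp
  qed
qed

lemma term_bound: "\<bar>a_seq n * x^n / fact n\<bar> \<le> (4 * \<bar>x\<bar>)^n"
proof -
  have "\<bar>a_seq n * x^n / fact n\<bar> = \<bar>a_seq n\<bar> * \<bar>x\<bar>^n / fact n" by (simp add: abs_mult power_abs)
  also have "\<dots> \<le> (4^n * fact n) * \<bar>x\<bar>^n / fact n"
    by (intro divide_right_mono mult_right_mono a_bound) auto
  also have "\<dots> = (4 * \<bar>x\<bar>)^n" by (simp add: power_mult_distrib)
  finally show ?thesis .
qed

lemma summable_g: assumes "\<bar>x\<bar> < 1/4" shows "summable (\<lambda>n. \<bar>a_seq n * x^n / fact n\<bar>)"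
proof (rule summable_comparison_test)
  show "\<exists>N. \<forall>n\<ge>N. norm \<bar>a_seq n * x^n / fact n\<bar> \<le> (4 * \<bar>x\<bar>)^n" using term_bound by auto
  show "summable (\<lambda>n. (4 * \<bar>x\<bar>)^n)" using assms by (intro summable_geometric) auto
qed

lemma summable_f: assumes "\<bar>x\<bar> < 1/4" shows "summable (\<lambda>n. a_seq n / fact (Suc n) * x^(Suc n))"
proof (rule summable_comparison_test)
  show "\<exists>N. \<forall>n\<ge>N. norm (a_seq n / fact (Suc n) * x^(Suc n)) \<le> \<bar>x\<bar> * (4 * \<bar>x\<bar>)^n"
  proof (intro exI allI impI)
    fix n :: nat
    have "norm (a_seq n / fact (Suc n) * x^(Suc n)) = \<bar>x\<bar> * \<bar>a_seq n * x^n / fact n\<bar> / real (Suc n)"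
      by (simp add: abs_mult power_abs divide_simps)
    also have "\<dots> \<le> \<bar>x\<bar> * \<bar>a_seq n * x^n / fact n\<bar> / 1"
      by (rule frac_le) auto
    also have "\<dots> = \<bar>x\<bar> * \<bar>a_seq n * x^n / fact n\<bar>" by simp
    also have "\<dots> \<le> \<bar>x\<bar> * (4 * \<bar>x\<bar>)^n" by (intro mult_left_mono term_bound) auto
    finally show "norm (a_seq n / fact (Suc n) * x^(Suc n)) \<le> \<bar>x\<bar> * (4 * \<bar>x\<bar>)^n" .
  qed
  show "summable (\<lambda>n. \<bar>x\<bar> * (4 * \<bar>x\<bar>)^n)" using assms by (intro summable_mult summable_geometric) auto
qed

definition ff :: "real \<Rightarrow> real" where "ff x = (\<Sum>n. a_seq n / fact (Suc n) * x^(Suc n))"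
definition gg :: "real \<Rightarrow> real" where "gg x = (\<Sum>n. a_seq n * x^n / fact n)"

lemma ff_deriv: assumes "\<bar>x\<bar> < 1/4" shows "DERIV ff x :> gg x"
proof -
  have eq: "(\<lambda>n. a_seq n / fact (Suc n) * real (Suc n) * y^n) = (\<lambda>n. a_seq n * y^n / fact n)" for y :: real
    by (rule ext) (simp add: divide_simps)
  have "DERIV (\<lambda>x. \<Sum>n. a_seq n / fact (Suc n) * x^(Suc n)) x :> (\<Sum>n. a_seq n / fact (Suc n) * real (Suc n) * x^n)"
  proof (rule DERIV_power_series'[where R="1/4"])
    fix y :: real assume "y \<in> {- (1/4)<..<1/4}"
    then have "\<bar>y\<bar> < 1/4" by auto
    then show "summable (\<lambda>n. a_seq n / fact (Suc n) * real (Suc n) * y^n)"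
      unfolding eq by (rule summable_rabs_cancel[OF summable_g])
  qed (use assms in auto)
  then show ?thesis unfolding ff_def[abs_def] gg_def eq .
qed

lemma exp_sums_real: "(\<lambda>n. x^n / fact n) sums exp (x::real)"
  using exp_converges[of x] by (simp add: divide_inverse mult.commute)

lemma ode_series:
  assumes x: "\<bar>x\<bar> < 1/4"
  shows "(4 - exp x) * gg x = 2 * ff x + 3 * exp x"
proof -
  define A where "A i = a_seq i * x^i / fact i" for i
  define B where "B j = x^j / fact j" for j
  define C where "C k = (\<Sum>i\<le>k. of_nat (k choose i) * a_seq i) * x^k / fact k" for k
  define X where "X k = (if k = 0 then 0 else a_seq (k - 1)) * x^k / fact k" for k
  have sA: "summable (\<lambda>k. norm (A k))" unfolding A_def using summable_g[OF x] by simp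
  have sB: "summable (\<lambda>k. norm (B k))"
  proof -
    have "(\<lambda>n. \<bar>x\<bar>^n / fact n) sums exp \<bar>x\<bar>" by (rule exp_sums_real)
    then have "summable (\<lambda>n. \<bar>x\<bar>^n / fact n)" by (rule sums_summable)
    moreover have "(\<lambda>k. norm (B k)) = (\<lambda>n. \<bar>x\<bar>^n / fact n)"
      by (rule ext) (simp add: B_def power_abs)
    ultimately show ?thesis by simp
  qed
  have gA: "suminf A = gg x" unfolding A_def gg_def by simp
  have eB: "suminf B = exp x" unfolding B_def using exp_sums_real[of x] by (simp add: sums_iff)
  have inner: "(\<Sum>i\<le>k. A i * B (k - i)) = C k" for k
  proof -
    have "A i * B (k - i) = of_nat (k choose i) * a_seq i * x^k / fact k" if "i \<le> k" for i
    proof -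
      have xp: "x^i * x^(k - i) = x^k" using that by (simp add: power_add[symmetric])
      have "A i * B (k - i) = a_seq i * (x^i * x^(k - i)) / (fact i * fact (k - i))"
        by (simp add: A_def B_def)
      also have "\<dots> = a_seq i * x^k * (fact k / (fact i * fact (k - i))) / fact k"
        unfolding xp by simp
      also have "\<dots> = of_nat (k choose i) * a_seq i * x^k / fact k"
        by (subst binomial_fact[OF that]) simp
      finally show ?thesis .
    qed
    then have "(\<Sum>i\<le>k. A i * B (k - i)) = (\<Sum>i\<le>k. of_nat (k choose i) * a_seq i * x^k / fact k)"
      by (intro sum.cong) auto
    also have "\<dots> = C k" unfolding C_def by (simp add: sum_distrib_right sum_divide_distrib)
    finally show ?thesis .
  qed
  have h2: "C sums (gg x * exp x)"
    using Cauchy_product_sums[OF sA sB] unfolding inner gA eB .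
  have h1: "(\<lambda>k. 4 * A k) sums (4 * gg x)"
    using sums_mult[OF summable_sums[OF summable_rabs_cancel[OF summable_g[OF x]]], of 4]
    unfolding A_def gg_def by simp
  have h3: "(\<lambda>k. 4 * A k - C k) sums (4 * gg x - gg x * exp x)"
    by (rule sums_diff[OF h1 h2])
  have hf: "(\<lambda>n. a_seq n / fact (Suc n) * x^(Suc n)) sums ff x"
    unfolding ff_def by (rule summable_sums[OF summable_f[OF x]])
  have hX: "X sums ff x"
  proof -
    have "(\<lambda>n. X (Suc n)) = (\<lambda>n. a_seq n / fact (Suc n) * x^(Suc n))"
      by (rule ext) (simp add: X_def)
    then have "(\<lambda>n. X (Suc n)) sums ff x" using hf by simp
    then have "X sums (ff x + X 0)" by (simp only: sums_Suc_iff)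
    then show ?thesis by (simp add: X_def)
  qed
  have h5: "(\<lambda>k. 2 * X k + 3 * B k) sums (2 * ff x + 3 * exp x)"
  proof -
    have hB: "B sums exp x" unfolding B_def by (rule exp_sums_real)
    show ?thesis using sums_add[OF sums_mult[OF hX, of 2] sums_mult[OF hB, of 3]] by simp
  qed
  have eqf: "(\<lambda>k. 4 * A k - C k) = (\<lambda>k. 2 * X k + 3 * B k)"
  proof (rule ext)
    fix k
    have "4 * a_seq k - (\<Sum>i\<le>k. of_nat (k choose i) * a_seq i) = 2 * (if k = 0 then 0 else a_seq (k - 1)) + 3"
      using a_rec[of k] by simp
    then have "(4 * a_seq k - (\<Sum>i\<le>k. of_nat (k choose i) * a_seq i)) * x^k / fact k
       = (2 * (if k = 0 then 0 else a_seq (k - 1)) + 3) * x^k / fact k" by simp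
    then show "4 * A k - C k = 2 * X k + 3 * B k"
      unfolding A_def C_def X_def B_def by (simp add: algebra_simps add_divide_distrib diff_divide_distrib)
  qed
  have "4 * gg x - gg x * exp x = 2 * ff x + 3 * exp x"
    using h3 h5 unfolding eqf by (rule sums_unique2)
  then show ?thesis by (simp add: algebra_simps)
qed

lemma exp_small: assumes "\<bar>x\<bar> < 1/4" shows "exp x < (4::real)"
proof -
  have "exp x \<le> exp (1/4::real)" using assms by simp
  also have "\<dots> \<le> 1 + 1/4 + (1/4)^2" by (rule exp_bound) auto
  finally show ?thesis by (simp add: power2_eq_square)
qed

lemma alg_mu:
  fixes E s e h h' :: real
  assumes "s*s = 4 - e" "s \<noteq> 0" "4 - e \<noteq> 0" "(4 - e) * h' = 2 * h"
  shows "(- E / 2 * s + - e / (2 * s) * E) * h + h' * (E * s) = 0"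
proof -
  have hh: "h' = 2 * h / (4 - e)" using assms(3,4) by (simp add: field_simps)
  have he: "e = 4 - s*s" using assms(1) by simp
  show ?thesis unfolding hh unfolding he using assms(2) by (simp add: field_simps)
qed

lemma ff_eq:
  assumes t: "\<bar>t\<bar> < 1/4"
  shows "ff t = 3 * K 0 t"
proof -
  define G where "G x = (exp (- x / 2) * sqrt (4 - exp x)) * (ff x - 3 * K 0 x)" for x
  have dG: "DERIV G x :> 0" if x: "\<bar>x\<bar> < 1/4" for x
  proof -
    have ex: "exp x < 4" by (rule exp_small[OF x])
    have w': "0 < 4 - exp x" using ex by simp
    have sp: "sqrt (4 - exp x) > 0" using ex by simp
    have dM: "DERIV (\<lambda>x. exp (- x / 2)) x :> - exp (- x / 2) / 2"
      by (rule DERIV_cong[OF DERIV_chain2[OF DERIV_exp DERIV_cdivide[OF DERIV_minus[OF DERIV_ident]], of 2]]) simp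
    note dmu = DERIV_mult[OF dM dS[OF ex]]
    note dh = DERIV_diff[OF ff_deriv[OF x] DERIV_cmult[OF K_deriv[OF ex, of 0], of 3]]
    note d = DERIV_mult[OF dmu dh]
    have ode: "(4 - exp x) * (gg x - 3 * K 1 x) = 2 * (ff x - 3 * K 0 x)"
      using ode_series[OF x] K1[OF ex] by (simp add: algebra_simps)
    have f1: "sqrt (4 - exp x) * sqrt (4 - exp x) = 4 - exp x" using w' by simp
    show ?thesis unfolding G_def[abs_def]
      apply (rule DERIV_cong[OF d])
      apply (rule alg_mu[OF f1])
      using sp w' ode by auto
  qed
  have G0: "G 0 = 0" by (simp add: G_def ff_def Kat0_0)
  have Gt: "G t = 0"
  proof (cases "0 < t")
    case True
    have "G t = G 0"
    proof (rule DERIV_isconst2[of 0 t])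
      show "continuous_on {0..t} G"
        using t by (intro continuous_at_imp_continuous_on ballI DERIV_isCont[OF dG]) auto
      show "\<And>x. 0 < x \<Longrightarrow> x < t \<Longrightarrow> DERIV G x :> 0" using t by (intro dG) auto
    qed (use True in auto)
    then show ?thesis using G0 by simp
  next
    case False
    show ?thesis
    proof (cases "t = 0")
      case True then show ?thesis using G0 by simp
    next
      case False
      with \<open>\<not> 0 < t\<close> have tn: "t < 0" by simp
      have "G 0 = G t"
      proof (rule DERIV_isconst2[of t 0])
        show "continuous_on {t..0} G"
          using t by (intro continuous_at_imp_continuous_on ballI DERIV_isCont[OF dG]) auto
        show "\<And>x. t < x \<Longrightarrow> x < 0 \<Longrightarrow> DERIV G x :> 0" using t by (intro dG) auto
      qed (use tn in auto)
      then show ?thesis using G0 by simp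
    qed
  qed
  have "exp (- t / 2) * sqrt (4 - exp t) > 0" using exp_small[OF t] by simp
  then show ?thesis using Gt exp_small[OF t] unfolding G_def by simp
qed

theorem mainTheorem7:
  shows "\<exists>r>0. \<forall>t::real. \<bar>t\<bar> < r \<longrightarrow>
    (\<lambda>n. a_seq n * t ^ (n + 1) / fact (n + 1)) sums
      (6 * exp (t / 2) * (arcsin (exp (t / 2) / 2) - arcsin (1 / 2)) / sqrt (4 - exp t))"
proof (intro exI[of _ "1/4"] conjI allI impI)
  fix t :: real assume t: "\<bar>t\<bar> < 1/4"
  have "(\<lambda>n. a_seq n / fact (Suc n) * t^(Suc n)) sums ff t"
    unfolding ff_def by (rule summable_sums[OF summable_f[OF t]])
  moreover have "(\<lambda>n. a_seq n / fact (Suc n) * t^(Suc n)) = (\<lambda>n. a_seq n * t ^ (n + 1) / fact (n + 1))"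
    by (rule ext) simp
  moreover have "ff t = 6 * exp (t / 2) * (arcsin (exp (t / 2) / 2) - arcsin (1 / 2)) / sqrt (4 - exp t)"
    using ff_eq[OF t] K0_F[OF exp_small[OF t]] by simp
  ultimately show "(\<lambda>n. a_seq n * t ^ (n + 1) / fact (n + 1)) sums
      (6 * exp (t / 2) * (arcsin (exp (t / 2) / 2) - arcsin (1 / 2)) / sqrt (4 - exp t))" by simp
qed simp
end
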